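(* Let $n\ge 2$ and let $a_1,\dots,a_n,b_1,\dots,b_n\in\{-1,+1\}$ be arbitrary. Define $\mathcal{S}_0=\sum_{i=1}^n a_i$, $\mathcal{S}_{00}=\sum_{i\neq j}a_ia_j$, $\mathcal{S}_{11}=\sum_{i\ne j}b_ib_j$, $\mathcal{S}_{01}=\sum_{i\neq j}a_ib_j$ (sums over ordered pairs $(i,j)$ of distinct indices in $\{1,\dots,n\}$). Then $$-2\mathcal{S}_0+\tfrac12\mathcal{S}_{00}-\mathcal{S}_{01}+\tfrac12\mathcal{S}_{11}+2n\ \ge\ 0.$$ Consequently, for every $n$-party local hidden variable model in which each party $i$ has two $\pm1$-valued observables $\mathcal{M}_0^{(i)},\mathcal{M}_1^{(i)}$, the same inequality holds with $\mathcal{S}_k=\sum_i\langle\mathcal{M}_k^{(i)}\rangle$ and $\mathcal{S}_{kl}=\sum_{i\ne j}\langle\mathcal{M}_k^{(i)}\mathcal{M}_l^{(j)}\rangle$.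
   Context: A local hidden variable (classical) model for $n$ parties each with two $\pm1$-valued measurements $k\in\{0,1\}$ is a probability distribution $q_\lambda$ over deterministic assignments $\lambda$ of values $\mathcal{M}_k^{(i)}(\lambda)\in\{\pm1\}$; expectation values are $\langle\prod \mathcal{M}\rangle=\sum_\lambda q_\lambda\prod\mathcal{M}(\lambda)$. Deterministic assignments correspond to $a_i=\mathcal{M}_0^{(i)}(\lambda)$, $b_i=\mathcal{M}_1^{(i)}(\lambda)$. *)

theory Defs
  imports Complex_Main
begin

definition pair_sum :: "nat \<Rightarrow> (nat \<Rightarrow> nat \<Rightarrow> real) \<Rightarrow> real" where
  "pair_sum n f = (\<Sum>i\<in>{1..n}. \<Sum>j\<in>{1..n} - {i}. f i j)"

definition bell_expr :: "nat \<Rightarrow> real \<Rightarrow> real \<Rightarrow> real \<Rightarrow> real \<Rightarrow> real" where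
  "bell_expr n S0 S00 S01 S11 = -2 * S0 + S00 / 2 - S01 + S11 / 2 + 2 * real n"

text \<open>Expectation value in a local hidden variable model given by a finite
  set of deterministic assignments Lam with weights q.\<close>
definition lhv_exp :: "'l set \<Rightarrow> ('l \<Rightarrow> real) \<Rightarrow> ('l \<Rightarrow> real) \<Rightarrow> real" where
  "lhv_exp Lam q g = (\<Sum>l\<in>Lam. q l * g l)"

text \<open>A local hidden variable model for parties 1..n with two +-1 observables each:
  M i k l is the value of observable k of party i under assignment l.\<close>
definition is_lhv_model :: "nat \<Rightarrow> 'l set \<Rightarrow> ('l \<Rightarrow> real) \<Rightarrow> (nat \<Rightarrow> nat \<Rightarrow> 'l \<Rightarrow> real) \<Rightarrow> bool" where
  "is_lhv_model n Lam q M \<longleftrightarrow> finite Lam \<and> (\<forall>l\<in>Lam. q l \<ge> 0) \<and> sum q Lam = 1 \<and>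
     (\<forall>i\<in>{1..n}. \<forall>k\<in>{0,1}. \<forall>l\<in>Lam. M i k l \<in> {-1, 1})"

end

theory Submission
  imports Defs
begin

lemma pair_prod: "pair_sum n (\<lambda>i j. f i * g j) =
   (\<Sum>i=1..n. f i) * (\<Sum>i=1..n. g i) - (\<Sum>i=1..n. f i * g i)"
proof -
  have "pair_sum n (\<lambda>i j. f i * g j) = (\<Sum>i=1..n. f i * (\<Sum>j=1..n. g j) - f i * g i)"
    unfolding pair_sum_def
    by (rule sum.cong) (auto simp: sum_diff1 sum_distrib_left[symmetric] algebra_simps)
  thus ?thesis by (simp add: sum_subtractf sum_distrib_right)
qed

lemma det_part:
  fixes a b :: "nat \<Rightarrow> real"
  assumes h: "\<forall>i\<in>{1..n}. a i \<in> {-1, 1} \<and> b i \<in> {-1, 1}"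
  shows "bell_expr n (\<Sum>i=1..n. a i) (pair_sum n (\<lambda>i j. a i * a j))
           (pair_sum n (\<lambda>i j. a i * b j)) (pair_sum n (\<lambda>i j. b i * b j)) \<ge> 0"
proof -
  define A where "A = (\<Sum>i=1..n. a i)"
  define B where "B = (\<Sum>i=1..n. b i)"
  define D where "D = (\<Sum>i=1..n. (a i - b i) / 2)"
  have aa: "(\<Sum>i=1..n. a i * a i) = real n"
    using h by (subst sum.cong[of _ _ _ "\<lambda>_. 1"]) auto
  have bb: "(\<Sum>i=1..n. b i * b i) = real n"
    using h by (subst sum.cong[of _ _ _ "\<lambda>_. 1"]) auto
  have per: "\<And>i. i \<in> {1..n} \<Longrightarrow> 1 - 2 * a i + a i * b i \<ge> b i - a i"
  proof -
    fix i assume "i \<in> {1..n}"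
    hence "a i \<in> {-1,1}" "b i \<in> {-1,1}" using h by auto
    thus "1 - 2 * a i + a i * b i \<ge> b i - a i" by auto
  qed
  have s1: "(\<Sum>i=1..n. 1 - 2 * a i + a i * b i) \<ge> (\<Sum>i=1..n. b i - a i)"
    using per by (rule sum_mono)
  have s1': "real n - 2 * A + (\<Sum>i=1..n. a i * b i) \<ge> B - A"
    using s1 by (simp add: sum.distrib sum_subtractf A_def B_def sum_distrib_left)
  have DAB: "D = (A - B) / 2"
    by (simp add: D_def A_def B_def sum_divide_distrib[symmetric] sum_subtractf)
  have Dint: "D \<in> \<int>"
    unfolding D_def
  proof (rule Ints_sum)
    fix i assume "i \<in> {1..n}"
    hence "a i \<in> {-1,1}" "b i \<in> {-1,1}" using h by auto
    hence "(a i - b i) / 2 \<in> {-1,0,1}" by auto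
    thus "(a i - b i) / 2 \<in> \<int>" by auto
  qed
  then obtain k where k: "D = of_int k" by (auto elim: Ints_cases)
  have "k * (k - 1) \<ge> 0"
    by (cases "k \<le> 0") (auto intro: mult_nonpos_nonpos)
  hence Dn: "D * (D - 1) \<ge> 0" using k
    by (metis of_int_0_le_iff of_int_1 of_int_diff of_int_mult)
  have "bell_expr n A (A * A - real n) (A * B - (\<Sum>i=1..n. a i * b i)) (B * B - real n)
        = (A - B)^2 / 2 - 2 * A + real n + (\<Sum>i=1..n. a i * b i)"
    by (simp add: bell_expr_def power2_eq_square field_simps)
  also have "\<dots> \<ge> 2 * (D * (D - 1))"
  proof -
    have "A - B = 2 * D" using DAB by simp
    hence "(A - B)^2 / 2 = 2 * (D * D)" by (simp add: power2_eq_square)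
    moreover have "2 * (D * (D - 1)) = 2 * (D * D) - 2 * D" by (simp add: algebra_simps)
    ultimately show ?thesis using s1' \<open>A - B = 2 * D\<close> by linarith
  qed
  finally have "bell_expr n A (A * A - real n) (A * B - (\<Sum>i=1..n. a i * b i)) (B * B - real n) \<ge> 0"
    using Dn by linarith
  thus ?thesis unfolding pair_prod aa bb A_def B_def .
qed

lemma bell_lin: assumes "sum q L = 1"
  shows "bell_expr n (\<Sum>l\<in>L. q l * x l) (\<Sum>l\<in>L. q l * y l) (\<Sum>l\<in>L. q l * z l) (\<Sum>l\<in>L. q l * w l)
   = (\<Sum>l\<in>L. q l * bell_expr n (x l) (y l) (z l) (w l))"
proof -
  have "(\<Sum>l\<in>L. q l * bell_expr n (x l) (y l) (z l) (w l)) =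
     (\<Sum>l\<in>L. (-2) * (q l * x l) + (q l * y l)/2 - q l * z l + (q l * w l)/2 + q l * (2 * real n))"
    by (rule sum.cong) (auto simp: bell_expr_def algebra_simps)
  also have "\<dots> = -2 * (\<Sum>l\<in>L. q l * x l) + (\<Sum>l\<in>L. q l * y l)/2 - (\<Sum>l\<in>L. q l * z l)
      + (\<Sum>l\<in>L. q l * w l)/2 + (\<Sum>l\<in>L. q l) * (2 * real n)"
    by (simp add: sum.distrib sum_subtractf sum_distrib_left sum_divide_distrib sum_distrib_right sum_negf)
  finally show ?thesis using assms by (simp add: bell_expr_def)
qed

lemma pair_exp: "pair_sum n (\<lambda>i j. lhv_exp Lam q (h i j)) =
    lhv_exp Lam q (\<lambda>l. pair_sum n (\<lambda>i j. h i j l))"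
  unfolding pair_sum_def lhv_exp_def
  by (simp add: sum_distrib_left sum.swap[of _ Lam])

lemma sum_exp: "(\<Sum>i=1..n. lhv_exp Lam q (h i)) = lhv_exp Lam q (\<lambda>l. \<Sum>i=1..n. h i l)"
  unfolding lhv_exp_def
  by (simp add: sum_distrib_left sum.swap[of _ Lam])

theorem mainTheorem2:
  fixes n :: nat
  assumes "n \<ge> 2"
  shows "(\<forall>a b :: nat \<Rightarrow> real.
            (\<forall>i\<in>{1..n}. a i \<in> {-1, 1} \<and> b i \<in> {-1, 1}) \<longrightarrow>
            bell_expr n (\<Sum>i=1..n. a i)
                        (pair_sum n (\<lambda>i j. a i * a j))
                        (pair_sum n (\<lambda>i j. a i * b j))
                        (pair_sum n (\<lambda>i j. b i * b j)) \<ge> 0)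
       \<and> (\<forall>(Lam :: 'l set) q M. is_lhv_model n Lam q M \<longrightarrow>
            bell_expr n (\<Sum>i=1..n. lhv_exp Lam q (M i 0))
                        (pair_sum n (\<lambda>i j. lhv_exp Lam q (\<lambda>l. M i 0 l * M j 0 l)))
                        (pair_sum n (\<lambda>i j. lhv_exp Lam q (\<lambda>l. M i 0 l * M j 1 l)))
                        (pair_sum n (\<lambda>i j. lhv_exp Lam q (\<lambda>l. M i 1 l * M j 1 l))) \<ge> 0)"
proof (intro conjI allI impI)
  fix a b :: "nat \<Rightarrow> real"
  assume "\<forall>i\<in>{1..n}. a i \<in> {-1, 1} \<and> b i \<in> {-1, 1}"
  thus "bell_expr n (\<Sum>i=1..n. a i) (pair_sum n (\<lambda>i j. a i * a j))
           (pair_sum n (\<lambda>i j. a i * b j)) (pair_sum n (\<lambda>i j. b i * b j)) \<ge> 0"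
    by (rule det_part)
next
  fix Lam :: "'l set" and q M
  assume m: "is_lhv_model n Lam q M"
  define F where "F = (\<lambda>l. bell_expr n (\<Sum>i=1..n. M i 0 l)
       (pair_sum n (\<lambda>i j. M i 0 l * M j 0 l)) (pair_sum n (\<lambda>i j. M i 0 l * M j 1 l))
       (pair_sum n (\<lambda>i j. M i 1 l * M j 1 l)))"
  have Fnn: "\<And>l. l \<in> Lam \<Longrightarrow> F l \<ge> 0"
    unfolding F_def by (rule det_part) (use m in \<open>auto simp: is_lhv_model_def\<close>)
  have sq: "sum q Lam = 1" using m by (simp add: is_lhv_model_def)
  have "bell_expr n (\<Sum>i=1..n. lhv_exp Lam q (M i 0))
          (pair_sum n (\<lambda>i j. lhv_exp Lam q (\<lambda>l. M i 0 l * M j 0 l)))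
          (pair_sum n (\<lambda>i j. lhv_exp Lam q (\<lambda>l. M i 0 l * M j 1 l)))
          (pair_sum n (\<lambda>i j. lhv_exp Lam q (\<lambda>l. M i 1 l * M j 1 l))) = lhv_exp Lam q F"
    unfolding sum_exp[where h="\<lambda>i. M i 0"] unfolding pair_exp unfolding F_def lhv_exp_def by (rule bell_lin[OF sq])
  moreover have "lhv_exp Lam q F \<ge> 0"
    unfolding lhv_exp_def using m Fnn
    by (intro sum_nonneg) (auto simp: is_lhv_model_def)
  ultimately show "bell_expr n (\<Sum>i=1..n. lhv_exp Lam q (M i 0))
          (pair_sum n (\<lambda>i j. lhv_exp Lam q (\<lambda>l. M i 0 l * M j 0 l)))
          (pair_sum n (\<lambda>i j. lhv_exp Lam q (\<lambda>l. M i 0 l * M j 1 l)))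
          (pair_sum n (\<lambda>i j. lhv_exp Lam q (\<lambda>l. M i 1 l * M j 1 l))) \<ge> 0" by simp
qed

end
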